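(* Let $c>0$ and let $K=K(L)$ be positive integers with $K/L\to c$ as $L\to\infty$. With $$s^*(K,L)=\frac{L\,(K-1)^{L}}{K^{L+1}-(K-1)^{L-1}\big((K-1)K+L\big)},$$ $$\Pi_P=(1-s^* )\Big(1-\big(1-\tfrac{1}{K}\big)^L\Big),\qquad \Pi_R=s^*\,\frac{K}{L}\Big(1-\big(1-\tfrac{1}{K}\big)^L\Big),$$ one has, as $L\to\infty$, $$s^*\to\frac{1}{c\,(e^{1/c}-1)},\qquad \Pi_P\to 1-\frac{c+1}{c\,e^{1/c}},\qquad \Pi_R\to e^{-1/c}.$$
   Context: Here $s^*(K,L)$ is the common offer of the $K$ proposers in the subgame-perfect Nash equilibrium of the Multi-Proposer-Multi-Responder Ultimatum Game with $K$ proposers and $L$ responders (responders playing the evolutionarily stable strategy, which selects each proposer with probability $1/K$), and $\Pi_P,\Pi_R$ are the resulting expected payoffs of a proposer and of a responder. *)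

theory Defs
  imports "HOL-Analysis.Analysis"
begin

text \<open>Equilibrium offer s*(K,L) in the Multi-Proposer-Multi-Responder Ultimatum Game.\<close>
definition s_star :: "nat \<Rightarrow> nat \<Rightarrow> real" where
  "s_star K L = (real L * (real K - 1) ^ L) /
     (real K ^ (L + 1) - (real K - 1) ^ (L - 1) * ((real K - 1) * real K + real L))"

definition Pi_P :: "nat \<Rightarrow> nat \<Rightarrow> real" where
  "Pi_P K L = (1 - s_star K L) * (1 - (1 - 1 / real K) ^ L)"

definition Pi_R :: "nat \<Rightarrow> nat \<Rightarrow> real" where
  "Pi_R K L = s_star K L * (real K / real L) * (1 - (1 - 1 / real K) ^ L)"

end

theory Submission
  imports Defs
begin

lemma s_star_alt:
  assumes k: "k \<ge> 2" and L: "L \<ge> 1"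
  shows "s_star k L = (real L / real k * (1 - 1 / real k) ^ L) /
     (1 - (1 - 1 / real k) ^ L * (1 + real L / ((real k - 1) * real k)))"
proof -
  define a where "a = real k"
  have a2: "a \<ge> 2" using k by (simp add: a_def)
  obtain m where m: "L = Suc m" using L by (cases L) auto
  have q: "(1 - 1 / a) ^ L = (a - 1) ^ L / a ^ L"
  proof -
    have "1 - 1 / a = (a - 1) / a" using a2 by (simp add: field_simps)
    then show ?thesis by (simp add: power_divide)
  qed
  have p1: "(a - 1) ^ (L - 1) = (a - 1) ^ L / (a - 1)"
    using a2 m by simp
  have p2: "a ^ (L + 1) = a ^ L * a" by simp
  have apos: "a ^ L > 0" using a2 by simp
  have bpos: "(a - 1) ^ L > 0" using a2 by simp
  show ?thesis
    unfolding s_star_def a_def[symmetric] q p1 p2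
    using a2 apos bpos
    apply (simp add: field_simps)
    apply (rule trans[OF mult_divide_mult_cancel_left[of "a * a^L", symmetric]])
     apply simp
    apply (rule arg_cong2[where f="(/)"])
     apply (simp add: algebra_simps)
    apply (simp add: algebra_simps)
    done
qed

theorem mainTheorem5:
  fixes c :: real and K :: "nat \<Rightarrow> nat"
  assumes "c > 0"
    and "\<And>L. K L > 0"
    and "((\<lambda>L. real (K L) / real L) \<longlongrightarrow> c) at_top"
  shows "((\<lambda>L. s_star (K L) L) \<longlongrightarrow> 1 / (c * (exp (1 / c) - 1))) at_top \<and>
         ((\<lambda>L. Pi_P (K L) L) \<longlongrightarrow> 1 - (c + 1) / (c * exp (1 / c))) at_top \<and>
         ((\<lambda>L. Pi_R (K L) L) \<longlongrightarrow> exp (- 1 / c)) at_top"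
proof -
  note c = assms(1) and lim = assms(3)
  have ev1: "eventually (\<lambda>L. real (K L) / real L > c / 2) at_top"
    using order_tendstoD(1)[OF lim, of "c/2"] c by simp
  have Kinf: "filterlim (\<lambda>L. real (K L)) at_top at_top"
  proof (rule filterlim_at_top_mono[of "\<lambda>L. c / 2 * real L"])
    show "filterlim (\<lambda>L. c / 2 * real L) at_top at_top"
      using c by (intro filterlim_tendsto_pos_mult_at_top[OF tendsto_const] filterlim_real_sequentially) auto
    show "eventually (\<lambda>L. c / 2 * real L \<le> real (K L)) at_top"
      using ev1 eventually_gt_at_top[of 0]
      by eventually_elim (simp add: field_simps)
  qed
  have Knat: "filterlim K sequentially at_top"
    using Kinf filterlim_sequentially_iff_filterlim_real by blast
  have K2: "eventually (\<lambda>L. K L \<ge> 2) at_top"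
    using Knat by (simp add: filterlim_at_top)
  have LK: "((\<lambda>L. real L / real (K L)) \<longlongrightarrow> 1 / c) at_top"
  proof -
    have "((\<lambda>L. inverse (real (K L) / real L)) \<longlongrightarrow> inverse c) at_top"
      using c by (intro tendsto_inverse lim) auto
    then show ?thesis by (simp add: field_simps)
  qed
  have E1: "((\<lambda>L. (1 - 1 / real (K L)) ^ (K L)) \<longlongrightarrow> exp (-1)) at_top"
    using filterlim_compose[OF tendsto_exp_limit_sequentially[of "-1"] Knat] by (simp add: o_def)
  have E2: "((\<lambda>L. ((1 - 1 / real (K L)) ^ (K L)) powr (real L / real (K L))) \<longlongrightarrow> exp (-1) powr (1 / c)) at_top"
    by (rule tendsto_powr[OF E1 LK]) simp
  have qlim: "((\<lambda>L. (1 - 1 / real (K L)) ^ L) \<longlongrightarrow> exp (- 1 / c)) at_top"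
  proof -
    have "eventually (\<lambda>L. ((1 - 1 / real (K L)) ^ (K L)) powr (real L / real (K L)) = (1 - 1 / real (K L)) ^ L) at_top"
      using K2
    proof eventually_elim
      case (elim L)
      have pos: "1 - 1 / real (K L) > 0" using elim by (simp add: field_simps)
      have "((1 - 1 / real (K L)) ^ (K L)) powr (real L / real (K L))
          = ((1 - 1 / real (K L)) powr real (K L)) powr (real L / real (K L))"
        using pos by (simp add: powr_realpow)
      also have "\<dots> = (1 - 1 / real (K L)) powr real L"
        using elim by (simp add: powr_powr)
      also have "\<dots> = (1 - 1 / real (K L)) ^ L" using pos by (simp add: powr_realpow)
      finally show ?case .
    qed
    moreover have "exp (-1) powr (1 / c) = exp (- 1 / c)"
      by (simp add: powr_def)
    ultimately show ?thesis using E2 tendsto_cong by fastforce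
  qed
  have inv0: "((\<lambda>L. 1 / (real (K L) - 1)) \<longlongrightarrow> 0) at_top"
  proof -
    have "filterlim (\<lambda>L. real (K L) - 1) at_top at_top"
      by (rule filterlim_tendsto_add_at_top[OF tendsto_const Kinf, of "-1", simplified])
    then show ?thesis by (simp add: tendsto_divide_0[OF tendsto_const] filterlim_at_top_imp_at_infinity)
  qed
  have small: "((\<lambda>L. real L / ((real (K L) - 1) * real (K L))) \<longlongrightarrow> 0) at_top"
  proof -
    have "((\<lambda>L. real L / real (K L) * (1 / (real (K L) - 1))) \<longlongrightarrow> 1 / c * 0) at_top"
      by (intro tendsto_mult LK inv0)
    then show ?thesis by (simp add: field_simps)
  qed
  define e where "e = exp (- 1 / c)"
  have e0: "e > 0" and e1: "e < 1" using c by (auto simp: e_def)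
  have den: "1 - e * (1 + 0) \<noteq> 0" using e1 by simp
  have S0: "((\<lambda>L. (real L / real (K L) * (1 - 1 / real (K L)) ^ L) /
     (1 - (1 - 1 / real (K L)) ^ L * (1 + real L / ((real (K L) - 1) * real (K L)))))
     \<longlongrightarrow> (1 / c * e) / (1 - e * (1 + 0))) at_top"
    unfolding e_def by (intro tendsto_intros LK qlim small) (use den e_def in auto)
  have evS: "eventually (\<lambda>L. (real L / real (K L) * (1 - 1 / real (K L)) ^ L) /
     (1 - (1 - 1 / real (K L)) ^ L * (1 + real L / ((real (K L) - 1) * real (K L)))) = s_star (K L) L) at_top"
    using K2 eventually_ge_at_top[of 1] by eventually_elim (simp add: s_star_alt)
  have S1: "((\<lambda>L. s_star (K L) L) \<longlongrightarrow> (1 / c * e) / (1 - e * (1 + 0))) at_top"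
    using tendsto_cong[OF evS] S0 by blast
  have ee: "exp (1 / c) * e = 1" unfolding e_def by (simp add: exp_minus[symmetric] exp_add[symmetric])
  have v1: "(1 / c * e) / (1 - e * (1 + 0)) = 1 / (c * (exp (1 / c) - 1))"
    using c e1 ee by (simp add: field_simps)
  have A: "((\<lambda>L. s_star (K L) L) \<longlongrightarrow> 1 / (c * (exp (1 / c) - 1))) at_top"
    using S1 v1 by simp
  have P0: "((\<lambda>L. Pi_P (K L) L) \<longlongrightarrow> (1 - (1 / c * e) / (1 - e * (1 + 0))) * (1 - e)) at_top"
    unfolding Pi_P_def e_def by (intro tendsto_intros S1[unfolded e_def] qlim)
  have v2: "(1 - (1 / c * e) / (1 - e * (1 + 0))) * (1 - e) = 1 - (c + 1) / (c * exp (1 / c))"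
    using c e1 ee by (simp add: field_simps)
  have R0: "((\<lambda>L. Pi_R (K L) L) \<longlongrightarrow> ((1 / c * e) / (1 - e * (1 + 0))) * c * (1 - e)) at_top"
    unfolding Pi_R_def e_def by (intro tendsto_intros S1[unfolded e_def] qlim lim)
  have v3: "((1 / c * e) / (1 - e * (1 + 0))) * c * (1 - e) = exp (- 1 / c)"
    using c e1 by (simp add: field_simps e_def)
  show ?thesis using A P0 v2 R0 v3 by simp
qed

end
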